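(* Let $f\in\ell_1(\mathbb{Z})$ be non-negative, let $m,N\in\mathbb{N}$, $p\in(0,1)$, $H,\mu>0$, and assume $\|f\|_\infty\leq 2H$ and that for every integer interval $I$ of cardinality $N$, $|\{t\in I:\ f(t)\geq H\}|\leq\mu N$. Let $x_1,\dots,x_m$ be any integers and set $\widetilde f(t)=\mathbb{E}_b f(t+b_1x_1+\dots+b_mx_m)$, where $b=(b_1,\dots,b_m)$ has independent Bernoulli($p$) components. Then for every integer interval $J$ of cardinality $N$, $$|\{t\in J:\ \widetilde f(t)\geq\sqrt2 H\}|\leq \mu N/(\sqrt2-1).$$
   Context: A Bernoulli($p$) random variable takes value $1$ with probability $p$ and $0$ with probability $1-p$. *)

theory Defs
  imports "HOL-Probability.Probability"
begin

definition ftilde :: "(int \<Rightarrow> real) \<Rightarrow> nat \<Rightarrow> real \<Rightarrow> (nat \<Rightarrow> int) \<Rightarrow> int \<Rightarrow> real" where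
  "ftilde f m p x t =
     measure_pmf.expectation (Pi_pmf {1..m} False (\<lambda>_. bernoulli_pmf p))
       (\<lambda>b. f (t + (\<Sum>i=1..m. (if b i then 1 else 0) * x i)))"

end

theory Submission
  imports Defs
begin

lemma shift_count:
  fixes f :: "int \<Rightarrow> real" and s a :: int
  shows "(\<Sum>t\<in>{a..<a + int N}. (if f (t + s) \<ge> H then 1 else 0 :: real))
         = real (card {t \<in> {a + s..<a + s + int N}. f t \<ge> H})"
proof -
  have 1: "(\<Sum>t\<in>{a..<a + int N}. (if f (t + s) \<ge> H then 1 else 0 :: real))
        = real (card {t \<in> {a..<a + int N}. f (t + s) \<ge> H})"
    by (simp add: sum.If_cases Int_def)
  have "{t \<in> {a + s..<a + s + int N}. f t \<ge> H} = (\<lambda>t. t + s) ` {t \<in> {a..<a + int N}. f (t + s) \<ge> H}"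
    apply (auto simp: image_iff)
    apply (rule_tac x="x - s" in exI)
    by auto
  hence "card {t \<in> {a + s..<a + s + int N}. f t \<ge> H} = card {t \<in> {a..<a + int N}. f (t + s) \<ge> H}"
    by (simp add: card_image inj_on_def)
  with 1 show ?thesis by simp
qed

lemma markov_count:
  fixes E :: "int \<Rightarrow> real" and A :: "int set" and c :: real
  assumes "finite A" "c > 0" "\<And>t. E t \<ge> 0"
  shows "c * real (card {t \<in> A. E t \<ge> c}) \<le> (\<Sum>t\<in>A. E t)"
proof -
  have "c * real (card {t \<in> A. E t \<ge> c}) = (\<Sum>t\<in>{t \<in> A. E t \<ge> c}. c)" by simp
  also have "\<dots> \<le> (\<Sum>t\<in>{t \<in> A. E t \<ge> c}. E t)" by (rule sum_mono) auto
  also have "\<dots> \<le> (\<Sum>t\<in>A. E t)" by (rule sum_mono2) (use assms in auto)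
  finally show ?thesis .
qed

theorem lemma4p10:
  fixes f :: "int \<Rightarrow> real" and m N :: nat and p H \<mu> :: real and x :: "nat \<Rightarrow> int"
  assumes l1: "(\<lambda>t. \<bar>f t\<bar>) summable_on UNIV"
    and nonneg: "\<And>t. f t \<ge> 0"
    and p: "0 < p" "p < 1"
    and H: "H > 0" and mu: "\<mu> > 0"
    and sup: "\<And>t. \<bar>f t\<bar> \<le> 2 * H"
    and dens: "\<And>a::int. real (card {t \<in> {a..<a + int N}. f t \<ge> H}) \<le> \<mu> * real N"
  shows "\<forall>a::int. real (card {t \<in> {a..<a + int N}. ftilde f m p x t \<ge> sqrt 2 * H})
            \<le> \<mu> * real N / (sqrt 2 - 1)"
proof
  fix a :: int
  define P where "P = Pi_pmf {1..m} False (\<lambda>_. bernoulli_pmf p)"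
  define S where "S = (\<lambda>b. (\<Sum>i=1..m. (if b i then 1 else 0) * x i) :: int)"
  define g where "g = (\<lambda>u. if f u \<ge> H then 1 else 0 :: real)"
  define E where "E = (\<lambda>t. measure_pmf.expectation P (\<lambda>b. g (t + S b)))"
  define J where "J = {a..<a + int N}"
  define c where "c = sqrt 2 - 1"
  have c: "c > 0" unfolding c_def by simp
  have intf: "integrable (measure_pmf P) (\<lambda>b. f (t + S b))" for t
    by (rule measure_pmf.integrable_const_bound[where B="2*H"]) (use sup in auto)
  have intg: "integrable (measure_pmf P) (\<lambda>b. g (t + S b))" for t
    by (rule measure_pmf.integrable_const_bound[where B="1"]) (auto simp: g_def)
  have Enn: "E t \<ge> 0" for t unfolding E_def by (rule integral_nonneg_AE) (auto simp: g_def)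
  have pt: "f u \<le> H + H * g u" for u
    using sup[of u] H by (auto simp: g_def)
  have ft: "ftilde f m p x t \<le> H + H * E t" for t
  proof -
    have "ftilde f m p x t = measure_pmf.expectation P (\<lambda>b. f (t + S b))"
      by (simp add: ftilde_def P_def S_def)
    also have "\<dots> \<le> measure_pmf.expectation P (\<lambda>b. H + H * g (t + S b))"
      by (rule integral_mono) (use intf intg pt in auto)
    also have "\<dots> = H + H * E t"
      using intg[of t] by (simp add: E_def)
    finally show ?thesis .
  qed
  have sub: "{t \<in> J. ftilde f m p x t \<ge> sqrt 2 * H} \<subseteq> {t \<in> J. E t \<ge> c}"
  proof safe
    fix t assume "t \<in> J" "sqrt 2 * H \<le> ftilde f m p x t"
    with ft[of t] have "sqrt 2 * H \<le> H + H * E t" by linarith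
    hence "H * c \<le> H * E t" by (simp add: c_def algebra_simps)
    thus "c \<le> E t" using H by simp
  qed
  have sumE: "(\<Sum>t\<in>J. E t) \<le> \<mu> * real N"
  proof -
    have "(\<Sum>t\<in>J. E t) = measure_pmf.expectation P (\<lambda>b. \<Sum>t\<in>J. g (t + S b))"
      unfolding E_def by (rule Bochner_Integration.integral_sum[where I=J and f="\<lambda>t b. g (t + S b)", symmetric]) (use intg in auto)
    also have "\<dots> \<le> measure_pmf.expectation P (\<lambda>b. \<mu> * real N)"
    proof (rule integral_mono)
      show "integrable (measure_pmf P) (\<lambda>b. \<Sum>t\<in>J. g (t + S b))"
        using intg by auto
      fix b
      have "(\<Sum>t\<in>J. g (t + S b)) = real (card {t \<in> {a + S b..<a + S b + int N}. f t \<ge> H})"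
        unfolding J_def g_def by (rule shift_count)
      also have "\<dots> \<le> \<mu> * real N" using dens by simp
      finally show "(\<Sum>t\<in>J. g (t + S b)) \<le> \<mu> * real N" .
    qed auto
    also have "\<dots> = \<mu> * real N" by simp
    finally show ?thesis .
  qed
  have "real (card {t \<in> J. ftilde f m p x t \<ge> sqrt 2 * H}) \<le> real (card {t \<in> J. E t \<ge> c})"
    using sub by (intro of_nat_mono card_mono) (auto simp: J_def intro: finite_subset[of _ "{a..<a + int N}"])
  also have "\<dots> \<le> \<mu> * real N / c"
    using markov_count[of J c E] c Enn sumE by (simp add: J_def field_simps)
  finally show "real (card {t \<in> {a..<a + int N}. ftilde f m p x t \<ge> sqrt 2 * H})
            \<le> \<mu> * real N / (sqrt 2 - 1)" by (simp add: J_def c_def)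
qed

end
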